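(* Let $\theta$ be a complex Garsia number whose minimal polynomial has constant term $\pm2$, let $\lambda=1/\theta$, and for $n\ge1$ let $\mathcal A_\lambda^{(n)}=\{\sum_{k=0}^{n-1}a_k\lambda^k: a_k\in\{-1,1\}\}$. Then (a) $\#\mathcal A_\lambda^{(n)}=2^n$ for all $n\ge1$; and (b) there exists $c>0$ such that for all $n\ge1$ and all distinct $x,y\in\mathcal A_\lambda^{(n)}$, $|x-y|\ge c\cdot 2^{-n/2}$.
   Context: An algebraic integer $\theta$ with $|\theta|>1$ is a Garsia number if all its Galois conjugates have modulus greater than one; a complex Garsia number is a non-real Garsia number. *)

theory Defs
  imports "HOL-Analysis.Analysis" "HOL-Computational_Algebra.Computational_Algebra"
begin

(* p is the minimal polynomial of the algebraic integer theta:
   a monic integer polynomial, irreducible in Z[x] (equivalently over Q, since monic),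
   having theta as a root. *)
definition is_int_min_poly :: "int poly \<Rightarrow> complex \<Rightarrow> bool" where
  "is_int_min_poly p \<theta> \<longleftrightarrow>
     lead_coeff p = 1 \<and> irreducible p \<and> poly (map_poly of_int p) \<theta> = 0"

(* Galois conjugates of theta: the complex roots of its minimal polynomial *)
definition garsia_number :: "complex \<Rightarrow> bool" where
  "garsia_number \<theta> \<longleftrightarrow> cmod \<theta> > 1 \<and>
     (\<exists>p. is_int_min_poly p \<theta> \<and>
          (\<forall>z. poly (map_poly of_int p) z = 0 \<longrightarrow> cmod z > 1))"

definition complex_garsia_number :: "complex \<Rightarrow> bool" where
  "complex_garsia_number \<theta> \<longleftrightarrow> garsia_number \<theta> \<and> Im \<theta> \<noteq> 0"

definition digit_set :: "complex \<Rightarrow> nat \<Rightarrow> complex set" where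
  "digit_set lam n = {z. \<exists>a :: nat \<Rightarrow> complex. (\<forall>k<n. a k \<in> {-1, 1}) \<and> z = (\<Sum>k<n. a k * lam ^ k)}"

end

theory Submission imports Defs "Berlekamp_Zassenhaus.Factorize_Int_Poly" "Berlekamp_Zassenhaus.Square_Free_Int_To_Square_Free_GFp" "Jordan_Normal_Form.Determinant"
begin

lemma of_rat_field_hom: "field_hom_0' (of_rat :: rat \<Rightarrow> complex)" by unfold_locales

lemma roots_list:
  fixes p :: "int poly"
  assumes lc: "lead_coeff p = 1" and irr: "irreducible p"
  shows "\<exists>as. distinct as \<and> length as = degree p \<and>
     (of_int_poly p :: complex poly) = (\<Prod>a\<leftarrow>as. [:-a,1:]) \<and>
     (\<forall>z. poly (of_int_poly p :: complex poly) z = 0 \<longleftrightarrow> z \<in> set as)"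
proof -
  let ?pc = "of_int_poly p :: complex poly"
  have "square_free (map_poly rat_of_int p)"
    by (rule square_free_int_rat[OF irreducible_imp_square_free[OF irr]])
  hence "square_free (map_poly (of_rat :: rat \<Rightarrow> complex) (map_poly rat_of_int p))"
    by (simp add: field_hom_0'.square_free_map_poly[OF of_rat_field_hom])
  moreover have "map_poly (of_rat :: rat \<Rightarrow> complex) (map_poly rat_of_int p) = ?pc"
    by (simp add: map_poly_map_poly o_def)
  ultimately have sf: "square_free ?pc" by simp
  have rsf: "rsquarefree ?pc" by (rule square_free_rsquarefree[OF sf])
  have dg: "degree ?pc = degree p" by simp
  have lc': "lead_coeff ?pc = 1" using lc by simp
  from fundamental_theorem_algebra_factorized[of ?pc] obtain as where
    as: "Polynomial.smult (lead_coeff ?pc) (\<Prod>a\<leftarrow>as. [:- a, 1:]) = ?pc" "length as = degree ?pc" by blast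
  have pc: "?pc = (\<Prod>a\<leftarrow>as. [:- a, 1:])" using as(1) lc' by simp
  have roots: "\<forall>z. poly ?pc z = 0 \<longleftrightarrow> z \<in> set as"
    unfolding pc poly_prod_list prod_list_zero_iff by auto
  have p0: "?pc \<noteq> 0" using lc' by auto
  have "card {x. poly ?pc x = 0} = degree ?pc" using rsf rsquarefree_card_degree[OF p0] by simp
  moreover have "{x. poly ?pc x = 0} = set as" using roots by auto
  ultimately have "card (set as) = length as" using as(2) by simp
  hence "distinct as" by (simp add: card_distinct)
  thus ?thesis using pc roots as(2) dg by auto
qed

lemma deg_pos:
  fixes p :: "int poly"
  assumes lc: "lead_coeff p = 1" and z: "poly (of_int_poly p :: complex poly) z = 0"
  shows "degree p \<noteq> 0"
proof
  assume "degree p = 0"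
  hence "p = [:1:]" using lc by (metis leading_coeff_0_iff monom_eq_1 monom_eq_1_iff pCons_0_as_mult one_poly_eq_simps(1) degree_0_id)
  thus False using z by simp
qed

lemma root_dvd:
  fixes p q :: "int poly"
  assumes lc: "lead_coeff p = 1" and irr: "irreducible p"
    and z: "poly (of_int_poly p :: complex poly) z = 0"
    and qz: "poly (of_int_poly q :: complex poly) z = 0"
  shows "(of_int_poly p :: rat poly) dvd of_int_poly q"
proof (rule ccontr)
  let ?rp = "of_int_poly p :: rat poly" and ?rq = "of_int_poly q :: rat poly"
  assume nd: "\<not> ?rp dvd ?rq"
  have dp: "degree p \<noteq> 0" by (rule deg_pos[OF lc z])
  have "primitive p" by (rule irreducible_imp_primitive[OF irr dp])
  hence "irreducible\<^sub>d p" using irr irreducible_primitive_connect by blast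
  hence "irreducible\<^sub>d ?rp" by (rule irreducible\<^sub>d_int_rat)
  hence "irreducible ?rp" by (simp add: irreducible_connect_field)
  hence "prime_elem ?rp" by (rule field_poly_irreducible_imp_prime)
  hence cop: "algebraic_semidom_class.coprime ?rp ?rq" using nd by (rule prime_elem_imp_coprime)
  obtain u v where uv: "bezout_coefficients ?rp ?rq = (u, v)" by (cases "bezout_coefficients ?rp ?rq")
  have "u * ?rp + v * ?rq = gcd ?rp ?rq" by (rule bezout_coefficients[OF uv])
  also have "gcd ?rp ?rq = 1" using cop by simp
  finally have eq: "u * ?rp + v * ?rq = 1" .
  interpret rh: map_poly_comm_ring_hom "of_rat :: rat \<Rightarrow> complex" by unfold_locales
  have e1: "poly (map_poly (of_rat :: rat \<Rightarrow> complex) (u * ?rp + v * ?rq)) z = 1"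
    by (simp add: eq)
  have e2: "map_poly (of_rat :: rat \<Rightarrow> complex) ?rp = of_int_poly p"
    by (simp add: map_poly_map_poly o_def)
  have e3: "map_poly (of_rat :: rat \<Rightarrow> complex) ?rq = of_int_poly q"
    by (simp add: map_poly_map_poly o_def)
  have "poly (map_poly of_rat u) z * poly (of_int_poly p :: complex poly) z
     + poly (map_poly of_rat v) z * poly (of_int_poly q :: complex poly) z = 1"
    using e1 unfolding rh.hom_add rh.hom_mult e2 e3 by simp
  thus False using z qz by simp
qed

lemma poly_sum_lt:
  fixes f :: "'a::comm_semiring_1 poly"
  assumes "f = 0 \<or> degree f < n"
  shows "poly f x = (\<Sum>k<n. coeff f k * x ^ k)"
proof (cases "f = 0")
  case True thus ?thesis by simp
next
  case False
  hence dn: "degree f < n" using assms by auto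
  have "poly f x = (\<Sum>k\<le>degree f. coeff f k * x ^ k)" by (rule poly_altdef)
  also have "\<dots> = (\<Sum>k<n. coeff f k * x ^ k)"
    by (rule sum.mono_neutral_left) (use dn in \<open>auto simp: coeff_eq_0\<close>)
  finally show ?thesis .
qed

lemma vandermonde_det_nz:
  fixes as :: "complex list"
  assumes dist: "distinct as" and len: "length as = d"
  shows "Determinant.det (mat d d (\<lambda>(i,k). (as!i)^k)) \<noteq> 0"
proof
  let ?V = "mat d d (\<lambda>(i,k). (as!i)^k) :: complex mat"
  assume "Determinant.det ?V = 0"
  then obtain v where v: "v \<in> carrier_vec d" "v \<noteq> 0\<^sub>v d" "?V *\<^sub>v v = 0\<^sub>v d"
    using det_0_iff_vec_prod_zero[of ?V d] by auto
  define w where "w = (\<Sum>k<d. monom (v $ k) k)"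
  have cw: "coeff w k = (if k < d then v $ k else 0)" for k
    unfolding w_def by (simp add: coeff_sum)
  have pw: "poly w t = (\<Sum>k<d. v $ k * t ^ k)" for t
    unfolding w_def by (simp add: poly_sum poly_monom)
  obtain k0 where k0: "k0 < d" "v $ k0 \<noteq> 0"
    using v(1,2) by (metis carrier_vecD eq_vecI index_zero_vec(1,2))
  have w0: "w \<noteq> 0" using cw[of k0] k0 by auto
  have dw: "degree w \<le> d - 1"
    by (rule degree_le) (use cw in auto)
  have "set as \<subseteq> {x. poly w x = 0}"
  proof
    fix t assume "t \<in> set as"
    then obtain i where i: "i < d" "as ! i = t" using len by (auto simp: in_set_conv_nth)
    have "(?V *\<^sub>v v) $ i = 0" using v(3) i by simp
    hence "(\<Sum>k<d. (as!i)^k * v $ k) = 0"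
      using i v(1) by (simp add: scalar_prod_def lessThan_atLeast0 row_def)
    thus "t \<in> {x. poly w x = 0}" using i by (simp add: pw mult.commute)
  qed
  hence "card (set as) \<le> card {x. poly w x = 0}"
    by (rule card_mono[OF poly_roots_finite[OF w0]])
  also have "\<dots> \<le> degree w" by (rule card_poly_roots_bound[OF w0])
  finally have "d \<le> d - 1" using dist len dw by (simp add: distinct_card)
  thus False using k0 by simp
qed

lemma monic_div:
  fixes p f :: "int poly"
  assumes lc: "lead_coeff p = 1"
  shows "\<exists>s r. f = p * s + r \<and> (r = 0 \<or> degree r < degree p)"
proof -
  have p0: "p \<noteq> 0" using lc by auto
  obtain s r where sr: "pseudo_divmod f p = (s, r)" by (cases "pseudo_divmod f p")
  from pseudo_divmod[OF p0 sr] lc show ?thesis by auto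
qed

lemma norm_int:
  fixes p q :: "int poly" and as :: "complex list"
  assumes lc: "lead_coeff p = 1" and dist: "distinct as" and len: "length as = degree p"
   and roots: "\<forall>a\<in>set as. poly (of_int_poly p) a = 0"
  shows "(\<Prod>a\<leftarrow>as. poly (of_int_poly q) a) \<in> \<int>"
proof -
  define d where "d = degree p"
  have "\<forall>j. \<exists>r. \<exists>s. monom 1 j * q = p * s + r \<and> (r = 0 \<or> degree r < d)"
    using monic_div[OF lc] unfolding d_def by blast
  then obtain r where r: "\<And>j. \<exists>s. monom 1 j * q = p * s + r j \<and> (r j = 0 \<or> degree (r j) < d)"
    by metis
  have key: "poly (of_int_poly (r j) :: complex poly) t = t ^ j * poly (of_int_poly q) t"
    if t: "t \<in> set as" for j t
  proof -
    obtain s where s: "monom 1 j * q = p * s + r j" using r[of j] by blast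
    have "poly (of_int_poly (monom 1 j * q) :: complex poly) t = poly (of_int_poly (p * s + r j)) t"
      by (simp only: s)
    thus ?thesis using roots t by (simp add: of_int_poly_hom.hom_mult of_int_poly_hom.hom_add poly_monom)
  qed
  have rsum: "poly (of_int_poly (r j) :: complex poly) t = (\<Sum>k<d. of_int (coeff (r j) k) * t ^ k)" for j t
  proof -
    have "of_int_poly (r j) = (0::complex poly) \<or> degree (of_int_poly (r j) :: complex poly) < d"
      using r[of j] by auto
    from poly_sum_lt[OF this] show ?thesis by simp
  qed
  define V where "V = (mat d d (\<lambda>(i,k). (as!i)^k) :: complex mat)"
  define B where "B = (mat d d (\<lambda>(k,j). coeff (r j) k) :: int mat)"
  define Bc where "Bc = (map_mat of_int B :: complex mat)"
  define \<alpha> where "\<alpha> = (\<lambda>i. poly (of_int_poly q :: complex poly) (as ! i))"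
  define D where "D = (mat d d (\<lambda>(i,j). if i = j then \<alpha> i else 0) :: complex mat)"
  have V: "V \<in> carrier_mat d d" and Bc: "Bc \<in> carrier_mat d d" and D: "D \<in> carrier_mat d d"
    unfolding V_def Bc_def B_def D_def by auto
  have asi: "i < d \<Longrightarrow> as ! i \<in> set as" for i using len d_def by auto
  have eq: "V * Bc = D * V"
  proof (rule eq_matI)
    fix i j assume i: "i < dim_row (D * V)" and j: "j < dim_col (D * V)"
    hence i: "i < d" and j: "j < d" using V D by auto
    have "(V * Bc) $$ (i, j) = (\<Sum>k<d. (as!i)^k * of_int (coeff (r j) k))"
      using i j unfolding V_def Bc_def B_def
      by (simp add: scalar_prod_def lessThan_atLeast0 row_def col_def)
    also have "\<dots> = poly (of_int_poly (r j) :: complex poly) (as ! i)"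
      by (simp add: rsum mult.commute)
    also have "\<dots> = (as!i) ^ j * \<alpha> i" using key[OF asi[OF i]] unfolding \<alpha>_def .
    also have "\<dots> = (D * V) $$ (i, j)"
    proof -
      have "(D * V) $$ (i, j) = (\<Sum>k\<in>{0..<d}. (if i = k then \<alpha> i else 0) * (as ! k) ^ j)"
        using i j unfolding V_def D_def by (simp add: scalar_prod_def row_def col_def)
      also have "\<dots> = \<alpha> i * (as ! i) ^ j"
        using i by (simp add: if_distrib[of "\<lambda>x. x * _"] cong: if_cong)
      finally show ?thesis by simp
    qed
    finally show "(V * Bc) $$ (i, j) = (D * V) $$ (i, j)" .
  qed (use V Bc D in auto)
  have "Determinant.det V * Determinant.det Bc = Determinant.det D * Determinant.det V"
    using arg_cong[OF eq, of Determinant.det] det_mult[OF V Bc] det_mult[OF D V] by simp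
  moreover have "Determinant.det V \<noteq> 0"
    unfolding V_def by (rule vandermonde_det_nz[OF dist]) (simp add: len d_def)
  ultimately have dd: "Determinant.det Bc = Determinant.det D" by simp
  have "Determinant.det D = prod_list (diag_mat D)"
    by (rule det_upper_triangular[OF _ D]) (auto simp: D_def upper_triangular_def)
  also have "diag_mat D = map (\<lambda>a. poly (of_int_poly q) a) as"
    unfolding diag_mat_def D_def \<alpha>_def using len d_def
    by (auto intro!: nth_equalityI)
  finally have "(\<Prod>a\<leftarrow>as. poly (of_int_poly q) a) = of_int (Determinant.det B)"
    using dd unfolding Bc_def by (simp add: of_int_hom.hom_det)
  thus ?thesis by simp
qed

lemma nonvanish:
  fixes p :: "int poly" and \<theta> :: complex and b :: "nat \<Rightarrow> int"
  assumes lc: "lead_coeff p = 1" and irr: "irreducible p"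
    and pt: "poly (of_int_poly p :: complex poly) \<theta> = 0"
    and c0: "coeff p 0 = 2 \<or> coeff p 0 = -2"
    and bv: "\<forall>k<n. b k \<in> {-1,0,1}" and bnz: "\<exists>k<n. b k \<noteq> 0"
  shows "(\<Sum>k<n. of_int (b k) * (1/\<theta>) ^ k) \<noteq> 0"
proof
  assume S0: "(\<Sum>k<n. of_int (b k) * (1/\<theta>) ^ k) = 0"
  have t0: "\<theta> \<noteq> 0"
  proof
    assume "\<theta> = 0"
    hence "poly (of_int_poly p :: complex poly) 0 = 0" using pt by simp
    hence "of_int (coeff p 0) = (0::complex)" by (simp add: poly_0_coeff_0)
    thus False using c0 by auto
  qed
  define M where "M = {k. k < n \<and> b k \<noteq> 0}"
  have Mf: "finite M" and Mne: "M \<noteq> {}" using bnz unfolding M_def by auto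
  define m where "m = Max M"
  have mM: "m \<in> M" using Mf Mne unfolding m_def by simp
  hence mn: "m < n" and bm: "b m \<noteq> 0" unfolding M_def by auto
  have above: "b k = 0" if "m < k" "k < n" for k
  proof (rule ccontr)
    assume "b k \<noteq> 0" hence "k \<in> M" using that unfolding M_def by auto
    hence "k \<le> m" using Mf unfolding m_def by simp
    thus False using that by simp
  qed
  define Q where "Q = (\<Sum>k\<le>m. monom (b k) (m - k))"
  have "poly (of_int_poly Q :: complex poly) \<theta> = (\<Sum>k\<le>m. of_int (b k) * \<theta> ^ (m - k))"
    unfolding Q_def by (simp add: of_int_poly_hom.hom_sum poly_sum poly_monom of_int_hom.map_poly_hom_monom)
  also have "\<dots> = \<theta> ^ m * (\<Sum>k\<le>m. of_int (b k) * (1/\<theta>) ^ k)"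
    unfolding sum_distrib_left
    by (rule sum.cong) (use t0 in \<open>auto simp: power_diff power_divide field_simps\<close>)
  also have "(\<Sum>k\<le>m. of_int (b k) * (1/\<theta>) ^ k) = (\<Sum>k<n. of_int (b k) * (1/\<theta>) ^ k)"
    by (rule sum.mono_neutral_left) (use mn above in auto)
  finally have Qt: "poly (of_int_poly Q :: complex poly) \<theta> = 0" using S0 by simp
  have dvd: "(of_int_poly p :: rat poly) dvd of_int_poly Q" by (rule root_dvd[OF lc irr pt Qt])
  obtain s r where sr: "Q = p * s + r" and rd: "r = 0 \<or> degree r < degree p"
    using monic_div[OF lc] by blast
  have "(of_int_poly Q :: rat poly) = of_int_poly p * of_int_poly s + of_int_poly r"
    by (simp add: sr of_int_poly_hom.hom_add of_int_poly_hom.hom_mult)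
  hence "(of_int_poly p :: rat poly) dvd of_int_poly r"
    using dvd by (metis dvd_add_right_iff dvd_triv_left)
  hence r0: "r = 0"
  proof -
    assume d: "(of_int_poly p :: rat poly) dvd of_int_poly r"
    show "r = 0"
    proof (rule ccontr)
      assume "r \<noteq> 0"
      hence "(of_int_poly r :: rat poly) \<noteq> 0" by simp
      from dvd_imp_degree_le[OF d this] have "degree p \<le> degree r" by simp
      thus False using rd \<open>r \<noteq> 0\<close> by simp
    qed
  qed
  have "coeff Q 0 = (\<Sum>k\<le>m. if m - k = 0 then b k else 0)"
    unfolding Q_def by (simp add: coeff_sum coeff_monom)
  also have "\<dots> = (\<Sum>k\<le>m. if k = m then b k else 0)"
    by (rule sum.cong) auto
  also have "\<dots> = b m" by simp
  finally have "b m = coeff p 0 * coeff s 0" using sr r0 by (simp add: coeff_mult_0)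
  moreover have "b m = 1 \<or> b m = -1" using bv mn bm by auto
  ultimately show False using c0 by (auto simp: algebra_simps) presburger+
qed

lemma dvd_root:
  fixes p q :: "int poly"
  assumes d: "(of_int_poly p :: rat poly) dvd of_int_poly q"
    and z: "poly (of_int_poly p :: complex poly) z = 0"
  shows "poly (of_int_poly q :: complex poly) z = 0"
proof -
  interpret rh: map_poly_comm_ring_hom "of_rat :: rat \<Rightarrow> complex" by unfold_locales
  obtain h where h: "(of_int_poly q :: rat poly) = of_int_poly p * h" using d by (elim dvdE)
  have "map_poly (of_rat :: rat \<Rightarrow> complex) (of_int_poly q) = map_poly of_rat (of_int_poly p) * map_poly of_rat h"
    unfolding h rh.hom_mult ..
  moreover have "map_poly (of_rat :: rat \<Rightarrow> complex) (of_int_poly q) = of_int_poly q"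
    by (simp add: map_poly_map_poly o_def)
  moreover have "map_poly (of_rat :: rat \<Rightarrow> complex) (of_int_poly p) = of_int_poly p"
    by (simp add: map_poly_map_poly o_def)
  ultimately show ?thesis using z by simp
qed

lemma geo_bound:
  fixes x :: real
  assumes "0 \<le> x" "x < 1"
  shows "(\<Sum>k<n. x ^ k) \<le> 1 / (1 - x)"
proof -
  have "(\<Sum>k<n. x ^ k) = (1 - x ^ n) / (1 - x)" using assms by (simp add: sum_gp_strict)
  also have "\<dots> \<le> 1 / (1 - x)" using assms by (intro divide_right_mono) auto
  finally show ?thesis .
qed

lemma R_bound:
  fixes a :: complex and b :: "nat \<Rightarrow> int"
  assumes a: "1 < cmod a" and bv: "\<forall>k<n. b k \<in> {-1,0,1}"
  shows "cmod (\<Sum>k<n. of_int (b k) * (1/a) ^ k) \<le> 1 / (1 - 1 / cmod a)"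
proof -
  have "cmod (\<Sum>k<n. of_int (b k) * (1/a) ^ k) \<le> (\<Sum>k<n. cmod (of_int (b k) * (1/a) ^ k))"
    by (rule norm_sum)
  also have "\<dots> \<le> (\<Sum>k<n. (1 / cmod a) ^ k)"
  proof (rule sum_mono)
    fix k assume "k \<in> {..<n}"
    hence "\<bar>b k\<bar> \<le> 1" using bv by auto
    hence "cmod (of_int (b k) :: complex) \<le> 1" by simp
    thus "cmod (of_int (b k) * (1/a) ^ k) \<le> (1 / cmod a) ^ k"
      by (simp add: norm_mult norm_power norm_divide mult_left_le_one_le)
  qed
  also have "\<dots> \<le> 1 / (1 - 1 / cmod a)" using a by (intro geo_bound) (auto simp: divide_less_eq)
  finally show ?thesis .
qed

lemma lower_bound:
  fixes p :: "int poly" and \<theta> :: complex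
  assumes lc: "lead_coeff p = 1" and irr: "irreducible p"
    and pt: "poly (of_int_poly p :: complex poly) \<theta> = 0"
    and c0: "coeff p 0 = 2 \<or> coeff p 0 = -2"
    and rg: "\<forall>z. poly (of_int_poly p :: complex poly) z = 0 \<longrightarrow> 1 < cmod z"
    and im: "Im \<theta> \<noteq> 0"
  shows "\<exists>C>0. \<forall>n (b :: nat \<Rightarrow> int). (\<forall>k<n. b k \<in> {-1,0,1}) \<longrightarrow> (\<exists>k<n. b k \<noteq> 0) \<longrightarrow>
           C / 2 ^ n \<le> (cmod (\<Sum>k<n. of_int (b k) * (1/\<theta>) ^ k))\<^sup>2"
proof -
  let ?pc = "of_int_poly p :: complex poly"
  obtain as where dist: "distinct as" and len: "length as = degree p"
    and pc: "?pc = (\<Prod>a\<leftarrow>as. [:-a,1:])" and rts: "\<And>z. poly ?pc z = 0 \<longleftrightarrow> z \<in> set as"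
    using roots_list[OF lc irr] by blast
  define S where "S = set as"
  have fS: "finite S" unfolding S_def by simp
  have tS: "\<theta> \<in> S" using pt rts S_def by simp
  have real_coeffs: "\<And>k. coeff ?pc k \<in> \<real>" by simp
  have ctS: "cnj \<theta> \<in> S" using real_poly_cnj_root_iff[OF real_coeffs, of \<theta>] pt rts S_def by simp
  have tne: "cnj \<theta> \<noteq> \<theta>" using im by (metis cnj.simps(2) neg_equal_zero)
  define Oth where "Oth = S - {\<theta>, cnj \<theta>}"
  have fO: "finite Oth" using fS Oth_def by simp
  have Sgt: "\<And>a. a \<in> S \<Longrightarrow> 1 < cmod a" using rg rts S_def by simp
  define K where "K = (\<Prod>a\<in>Oth. 1 / (1 - 1 / cmod a))"
  have facpos: "0 < 1 / (1 - 1 / cmod a)" if "a \<in> Oth" for a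
  proof -
    have "1 < cmod a" using Sgt that Oth_def by simp
    hence "1 / cmod a < 1" by (simp add: divide_less_eq)
    thus ?thesis by simp
  qed
  have Kpos: "0 < K" unfolding K_def by (rule prod_pos) (use facpos in auto)
  have S0: "0 \<notin> S" using Sgt by force
  have normS: "cmod (\<Prod>a\<in>S. a) = 2"
  proof -
    have "poly ?pc 0 = (\<Prod>a\<leftarrow>as. - a)" unfolding pc poly_prod_list by (simp add: o_def)
    also have "\<dots> = (\<Prod>a\<in>S. - a)" unfolding S_def by (simp add: prod.distinct_set_conv_list[OF dist])
    finally have "cmod (\<Prod>a\<in>S. - a) = cmod (of_int (coeff p 0) :: complex)"
      by (simp add: poly_0_coeff_0)
    also have "\<dots> = 2" using c0 by auto
    finally show ?thesis by (simp add: prod_norm[symmetric])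
  qed
  show ?thesis
  proof (intro exI[of _ "2 / K"] conjI allI impI)
    show "0 < 2 / K" using Kpos by simp
    fix n and b :: "nat \<Rightarrow> int"
    assume bv: "\<forall>k<n. b k \<in> {-1,0,1}" and bnz: "\<exists>k<n. b k \<noteq> 0"
    define R where "R = (\<lambda>t::complex. \<Sum>k<n. of_int (b k) * (1/t) ^ k)"
    have Rt: "R \<theta> \<noteq> 0" unfolding R_def by (rule nonvanish[OF lc irr pt c0 bv bnz])
    have n1: "1 \<le> n" using bnz by auto
    define Q where "Q = (\<Sum>k<n. monom (b k) (n - 1 - k))"
    have PQ: "poly (of_int_poly Q :: complex poly) t = t ^ (n - 1) * R t" if t0: "t \<noteq> 0" for t
    proof -
      have "poly (of_int_poly Q :: complex poly) t = (\<Sum>k<n. of_int (b k) * t ^ (n - 1 - k))"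
        unfolding Q_def by (simp add: of_int_poly_hom.hom_sum poly_sum poly_monom of_int_hom.map_poly_hom_monom)
      also have "\<dots> = t ^ (n - 1) * R t"
        unfolding R_def sum_distrib_left
        by (rule sum.cong) (use t0 in \<open>auto simp: power_diff power_divide field_simps\<close>)
      finally show ?thesis .
    qed
    have Qnz: "poly (of_int_poly Q :: complex poly) a \<noteq> 0" if aS: "a \<in> S" for a
    proof
      assume Qa: "poly (of_int_poly Q :: complex poly) a = 0"
      have pa: "poly ?pc a = 0" using aS rts S_def by simp
      have "(of_int_poly p :: rat poly) dvd of_int_poly Q" by (rule root_dvd[OF lc irr pa Qa])
      hence "poly (of_int_poly Q :: complex poly) \<theta> = 0" by (rule dvd_root[OF _ pt])
      hence "\<theta> ^ (n - 1) * R \<theta> = 0" using PQ[of \<theta>] S0 tS by auto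
      thus False using Rt S0 tS by auto
    qed
    define N where "N = (\<Prod>a\<leftarrow>as. poly (of_int_poly Q :: complex poly) a)"
    have NZ: "N \<in> \<int>" unfolding N_def by (rule norm_int[OF lc dist len]) (use rts in auto)
    have NS: "N = (\<Prod>a\<in>S. poly (of_int_poly Q :: complex poly) a)"
      unfolding N_def S_def by (simp add: prod.distinct_set_conv_list[OF dist])
    have Nnz: "N \<noteq> 0" unfolding NS using Qnz fS by simp
    have N1: "1 \<le> cmod N"
    proof -
      obtain m where m: "N = of_int m" using NZ by (elim Ints_cases)
      hence "m \<noteq> 0" using Nnz by simp
      thus ?thesis using m by simp
    qed
    have "N = (\<Prod>a\<in>S. a ^ (n - 1) * R a)"
      unfolding NS
    proof (rule prod.cong[OF refl])
      fix a assume "a \<in> S"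
      with S0 have "a \<noteq> 0" by auto
      thus "poly (of_int_poly Q :: complex poly) a = a ^ (n - 1) * R a" by (rule PQ)
    qed
    also have "\<dots> = (\<Prod>a\<in>S. a) ^ (n - 1) * (\<Prod>a\<in>S. R a)"
      by (simp add: prod.distrib prod_power_distrib)
    finally have "cmod N = 2 ^ (n - 1) * cmod (\<Prod>a\<in>S. R a)"
      using normS by (simp add: norm_mult norm_power)
    also have "cmod (\<Prod>a\<in>S. R a) = (\<Prod>a\<in>S. cmod (R a))" by (simp add: prod_norm)
    also have "\<dots> = cmod (R \<theta>) * (cmod (R (cnj \<theta>)) * (\<Prod>a\<in>Oth. cmod (R a)))"
    proof -
      have Seq: "S = insert \<theta> (insert (cnj \<theta>) Oth)" using tS ctS Oth_def by auto
      have n1: "\<theta> \<notin> insert (cnj \<theta>) Oth" and n2: "cnj \<theta> \<notin> Oth" using tne Oth_def by auto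
      have "(\<Prod>a\<in>S. cmod (R a)) = (\<Prod>a\<in>insert \<theta> (insert (cnj \<theta>) Oth). cmod (R a))"
        by (simp only: Seq[symmetric])
      also have "\<dots> = cmod (R \<theta>) * (\<Prod>a\<in>insert (cnj \<theta>) Oth. cmod (R a))"
        using fO n1 by (intro prod.insert) auto
      also have "(\<Prod>a\<in>insert (cnj \<theta>) Oth. cmod (R a)) = cmod (R (cnj \<theta>)) * (\<Prod>a\<in>Oth. cmod (R a))"
        using fO n2 by (intro prod.insert) auto
      finally show ?thesis .
    qed
    also have "cmod (R (cnj \<theta>)) = cmod (R \<theta>)"
    proof -
      have "R (cnj \<theta>) = cnj (R \<theta>)" unfolding R_def by (simp add: cnj_sum)
      thus ?thesis by simp
    qed
    finally have eqN: "cmod N = 2 ^ (n - 1) * (cmod (R \<theta>))\<^sup>2 * (\<Prod>a\<in>Oth. cmod (R a))"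
      by (simp add: power2_eq_square)
    define A where "A = (2::real) ^ (n - 1)"
    define X where "X = (cmod (R \<theta>))\<^sup>2"
    define P where "P = (\<Prod>a\<in>Oth. cmod (R a))"
    have PK: "P \<le> K"
      unfolding K_def P_def
    proof (rule prod_mono)
      fix a assume "a \<in> Oth"
      hence "1 < cmod a" using Sgt Oth_def by simp
      thus "0 \<le> cmod (R a) \<and> cmod (R a) \<le> 1 / (1 - 1 / cmod a)"
        unfolding R_def using R_bound[OF _ bv] by simp
    qed
    have A0: "0 < A" unfolding A_def by simp
    have X0: "0 \<le> X" unfolding X_def by simp
    have "A * X * P \<le> A * X * K" by (rule mult_left_mono[OF PK]) (use A0 X0 in simp)
    hence one: "1 \<le> A * X * K" using N1 eqN unfolding A_def X_def P_def by linarith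
    have pw: "(2::real) ^ n = 2 * A" unfolding A_def using n1 by (simp add: power_eq_if)
    have "2 / K / 2 ^ n = 1 / (A * K)" unfolding pw using Kpos A0 by (simp add: field_simps)
    also have "\<dots> \<le> X" using one A0 Kpos by (simp add: divide_le_eq mult_ac)
    finally show "2 / K / 2 ^ n \<le> (cmod (\<Sum>k<n. of_int (b k) * (1/\<theta>) ^ k))\<^sup>2"
      unfolding X_def R_def .
  qed
qed

lemma diff_rep:
  fixes a a' :: "nat \<Rightarrow> complex" and l :: complex
  assumes av: "\<forall>k<n. a k \<in> {-1,1}" and av': "\<forall>k<n. a' k \<in> {-1,1}"
  shows "\<exists>b::nat\<Rightarrow>int. (\<forall>k<n. b k \<in> {-1,0,1}) \<and> ((\<exists>k<n. a k \<noteq> a' k) \<longrightarrow> (\<exists>k<n. b k \<noteq> 0)) \<and>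
     (\<Sum>k<n. a k * l^k) - (\<Sum>k<n. a' k * l^k) = 2 * (\<Sum>k<n. of_int (b k) * l^k)"
proof -
  define b where "b = (\<lambda>k. if a k = a' k then 0 else if a k = 1 then 1 else (-1::int))"
  have bd: "a k - a' k = 2 * of_int (b k)" if "k < n" for k
  proof -
    have "a k = -1 \<or> a k = 1" "a' k = -1 \<or> a' k = 1" using av av' that by auto
    thus ?thesis unfolding b_def by auto
  qed
  have "(\<Sum>k<n. a k * l^k) - (\<Sum>k<n. a' k * l^k) = (\<Sum>k<n. (a k - a' k) * l^k)"
    by (simp add: sum_subtractf[symmetric] algebra_simps)
  also have "\<dots> = (\<Sum>k<n. 2 * (of_int (b k) * l^k))"
    by (rule sum.cong) (auto simp: bd)
  also have "\<dots> = 2 * (\<Sum>k<n. of_int (b k) * l^k)" by (simp add: sum_distrib_left)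
  finally have e: "(\<Sum>k<n. a k * l^k) - (\<Sum>k<n. a' k * l^k) = 2 * (\<Sum>k<n. of_int (b k) * l^k)" .
  have "\<forall>k<n. b k \<in> {-1,0,1}" unfolding b_def by auto
  moreover have "(\<exists>k<n. a k \<noteq> a' k) \<longrightarrow> (\<exists>k<n. b k \<noteq> 0)"
  proof
    assume "\<exists>k<n. a k \<noteq> a' k"
    then obtain k where "k < n" "a k \<noteq> a' k" by blast
    hence "b k \<noteq> 0" unfolding b_def by simp
    thus "\<exists>k<n. b k \<noteq> 0" using \<open>k < n\<close> by blast
  qed
  ultimately show ?thesis using e by blast
qed

lemma digit_set_image:
  "digit_set l n = (\<lambda>a. \<Sum>k<n. a k * l ^ k) ` (PiE {..<n} (\<lambda>_. {-1,1}))"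
proof (intro equalityI subsetI)
  fix z assume "z \<in> digit_set l n"
  then obtain a where a: "\<forall>k<n. a k \<in> {-1, 1}" "z = (\<Sum>k<n. a k * l ^ k)"
    unfolding digit_set_def by blast
  have "restrict a {..<n} \<in> PiE {..<n} (\<lambda>_. {-1,1})" using a(1) by auto
  moreover have "z = (\<Sum>k<n. restrict a {..<n} k * l ^ k)" using a(2) by simp
  ultimately show "z \<in> (\<lambda>a. \<Sum>k<n. a k * l ^ k) ` (PiE {..<n} (\<lambda>_. {-1,1}))" by blast
next
  fix z assume "z \<in> (\<lambda>a. \<Sum>k<n. a k * l ^ k) ` (PiE {..<n} (\<lambda>_. {-1,1}))"
  then obtain a where "a \<in> PiE {..<n} (\<lambda>_. {-1,1})" "z = (\<Sum>k<n. a k * l ^ k)" by blast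
  thus "z \<in> digit_set l n" unfolding digit_set_def by auto
qed

theorem mainTheorem10:
  fixes \<theta> :: complex and p :: "int poly"
  assumes "complex_garsia_number \<theta>"
    and "is_int_min_poly p \<theta>"
    and "coeff p 0 = 2 \<or> coeff p 0 = -2"
  shows "(\<forall>n\<ge>1. card (digit_set (1 / \<theta>) n) = 2 ^ n) \<and>
         (\<exists>c>0. \<forall>n\<ge>1. \<forall>x\<in>digit_set (1 / \<theta>) n. \<forall>y\<in>digit_set (1 / \<theta>) n.
              x \<noteq> y \<longrightarrow> cmod (x - y) \<ge> c * 2 powr (- real n / 2))"
proof -
  have lc: "lead_coeff p = 1" and irr: "irreducible p"
    and pt: "poly (of_int_poly p :: complex poly) \<theta> = 0"
    using assms(2) unfolding is_int_min_poly_def by auto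
  have c0: "coeff p 0 = 2 \<or> coeff p 0 = -2" by (rule assms(3))
  have im: "Im \<theta> \<noteq> 0" using assms(1) unfolding complex_garsia_number_def by auto
  obtain p' where p': "is_int_min_poly p' \<theta>"
    and p'r: "\<forall>z. poly (of_int_poly p' :: complex poly) z = 0 \<longrightarrow> 1 < cmod z"
    using assms(1) unfolding complex_garsia_number_def garsia_number_def by auto
  have p't: "poly (of_int_poly p' :: complex poly) \<theta> = 0" using p' unfolding is_int_min_poly_def by auto
  have dpp: "(of_int_poly p :: rat poly) dvd of_int_poly p'" by (rule root_dvd[OF lc irr pt p't])
  have rg: "\<forall>z. poly (of_int_poly p :: complex poly) z = 0 \<longrightarrow> 1 < cmod z"
    using dvd_root[OF dpp] p'r by blast
  let ?l = "1 / \<theta>"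
  have partA: "card (digit_set ?l n) = 2 ^ n" for n
  proof -
    let ?F = "\<lambda>a. \<Sum>k<n. a k * ?l ^ k"
    let ?P = "PiE {..<n} (\<lambda>_. {-1,1::complex})"
    have inj: "inj_on ?F ?P"
    proof (rule inj_onI, rule ccontr)
      fix a a' assume a: "a \<in> ?P" and a': "a' \<in> ?P" and eq: "?F a = ?F a'" and ne: "a \<noteq> a'"
      obtain k where k: "a k \<noteq> a' k" using ne by auto
      have kn: "k < n"
      proof (rule ccontr)
        assume "\<not> k < n"
        hence kk: "k \<notin> {..<n}" by simp
        have "a k = undefined" by (rule PiE_arb[OF a kk])
        moreover have "a' k = undefined" by (rule PiE_arb[OF a' kk])
        ultimately show False using k by simp
      qed
      have av: "\<forall>k<n. a k \<in> {-1,1}" using PiE_mem[OF a] by simp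
      have av': "\<forall>k<n. a' k \<in> {-1,1}" using PiE_mem[OF a'] by simp
      obtain b :: "nat \<Rightarrow> int" where bv: "\<forall>k<n. b k \<in> {-1,0,1}" and bimp: "(\<exists>k<n. a k \<noteq> a' k) \<longrightarrow> (\<exists>k<n. b k \<noteq> 0)"
        and de: "?F a - ?F a' = 2 * (\<Sum>k<n. of_int (b k) * ?l^k)"
        using diff_rep[OF av av', of ?l] by (elim exE conjE)
      have bnz: "\<exists>k<n. b k \<noteq> 0" using bimp k kn by blast
      have "(\<Sum>k<n. of_int (b k) * ?l^k) \<noteq> 0" by (rule nonvanish[OF lc irr pt c0 bv bnz])
      thus False using de eq by simp
    qed
    have "card (digit_set ?l n) = card ?P"
      unfolding digit_set_image by (rule card_image[OF inj])
    also have "\<dots> = 2 ^ n" by (simp add: card_PiE numeral_2_eq_2)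
    finally show ?thesis .
  qed
  obtain C where C0: "0 < C" and Cb: "\<forall>n (b :: nat \<Rightarrow> int). (\<forall>k<n. b k \<in> {-1,0,1}) \<longrightarrow> (\<exists>k<n. b k \<noteq> 0) \<longrightarrow>
           C / 2 ^ n \<le> (cmod (\<Sum>k<n. of_int (b k) * (1/\<theta>) ^ k))\<^sup>2"
    using lower_bound[OF lc irr pt c0 rg im] by blast
  have partB: "cmod (x - y) \<ge> 2 * sqrt C * 2 powr (- real n / 2)"
    if x: "x \<in> digit_set ?l n" and y: "y \<in> digit_set ?l n" and xy: "x \<noteq> y" for n x y
  proof -
    obtain a where av: "\<forall>k<n. a k \<in> {-1, 1}" and xa: "x = (\<Sum>k<n. a k * ?l ^ k)"
      using x unfolding digit_set_def by blast
    obtain a' where av': "\<forall>k<n. a' k \<in> {-1, 1}" and ya: "y = (\<Sum>k<n. a' k * ?l ^ k)"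
      using y unfolding digit_set_def by blast
    have "\<exists>k<n. a k \<noteq> a' k"
    proof (rule ccontr)
      assume "\<not> ?thesis"
      hence "x = y" unfolding xa ya by (intro sum.cong) auto
      thus False using xy by simp
    qed
    note ex = this
    obtain b :: "nat \<Rightarrow> int" where bv: "\<forall>k<n. b k \<in> {-1,0,1}" and bimp: "(\<exists>k<n. a k \<noteq> a' k) \<longrightarrow> (\<exists>k<n. b k \<noteq> 0)"
        and de0: "(\<Sum>k<n. a k * ?l ^ k) - (\<Sum>k<n. a' k * ?l ^ k) = 2 * (\<Sum>k<n. of_int (b k) * ?l^k)"
      using diff_rep[OF av av', of ?l] by (elim exE conjE)
    have bnz: "\<exists>k<n. b k \<noteq> 0" using bimp ex by (rule mp)
    have de: "x - y = 2 * (\<Sum>k<n. of_int (b k) * ?l^k)" using de0 xa ya by simp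
    define S where "S = (\<Sum>k<n. of_int (b k) * ?l^k)"
    have "C / 2 ^ n \<le> (cmod S)\<^sup>2" using Cb bv bnz unfolding S_def by blast
    hence "sqrt (C / 2 ^ n) \<le> cmod S" using real_sqrt_le_mono by fastforce
    moreover have "sqrt (C / 2 ^ n) = sqrt C * 2 powr (- real n / 2)"
    proof -
      have "sqrt ((2::real) ^ n) = 2 powr (real n / 2)"
        by (simp add: powr_half_sqrt_powr powr_realpow)
      moreover have "(2::real) powr (- real n / 2) = 1 / 2 powr (real n / 2)"
        by (simp add: powr_minus_divide)
      ultimately show ?thesis by (simp add: real_sqrt_divide)
    qed
    ultimately have "sqrt C * 2 powr (- real n / 2) \<le> cmod S" by simp
    moreover have "cmod (x - y) = 2 * cmod S" unfolding de S_def by (simp add: norm_mult)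
    ultimately show ?thesis by simp
  qed
  show ?thesis
  proof (intro conjI)
    show "\<forall>n\<ge>1. card (digit_set (1 / \<theta>) n) = 2 ^ n" using partA by blast
    show "\<exists>c>0. \<forall>n\<ge>1. \<forall>x\<in>digit_set (1 / \<theta>) n. \<forall>y\<in>digit_set (1 / \<theta>) n.
              x \<noteq> y \<longrightarrow> cmod (x - y) \<ge> c * 2 powr (- real n / 2)"
      using partB C0 by (intro exI[of _ "2 * sqrt C"]) auto
  qed
qed

end
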